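(* Let $d\ge 2$, $\mathcal{D}\subset\mathbb{R}^d$ open and bounded, $\mathcal{K}=\{0,\dots,\kappa-1\}$, $\boldsymbol{\phi}\in\mathcal{C}^\infty(\mathbb{R}^d,\mathbb{R}^\kappa)$. For all $k\in\mathcal{K}$, $$\mathcal{D}\cap\bigcup_{\mathcal{I}\in\mathbb{I}_k^2}\mathcal{E}_{\mathcal{I}}(\boldsymbol{\phi})=\mathcal{D}\cap\bigcup_{\mathcal{I}\in\mathbb{I}_k^r,\,r\ge 2}\mathcal{E}_{\mathcal{I}}(\boldsymbol{\phi})\subset\mathcal{D}\cap\partial\Omega_k(\boldsymbol{\phi}).$$ If in addition $|D\widehat{\boldsymbol{\phi}}_{\mathcal{I}}|>0$ on $\mathcal{M}_{\mathcal{I}}(\boldsymbol{\phi})$ for all $\mathcal{I}\in\mathbb{I}_k^2$, then $$\mathcal{D}\cap\bigcup_{\mathcal{I}\in\mathbb{I}_k^2}\mathcal{E}_{\mathcal{I}}(\boldsymbol{\phi})=\mathcal{D}\cap\bigcup_{\mathcal{I}\in\mathbb{I}_k^r,\,r\ge 2}\mathcal{E}_{\mathcal{I}}(\boldsymbol{\phi})=\mathcal{D}\cap\partial\Omega_k(\boldsymbol{\phi}).$$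
   Context: $\boldsymbol{\phi}=(\phi_0,\dots,\phi_{\kappa-1})$. For $j\in\mathcal{K}$, $\Omega_j(\boldsymbol{\phi})=\operatorname{int}\{x\in\mathcal{D}\mid\phi_j(x)\le\phi_m(x)\ \forall m\ne j\}$. $\mathbb{I}_k^r=\{\mathcal{I}\subset\mathcal{K}\mid|\mathcal{I}|=r,\ k\in\mathcal{I}\}$. For $\mathcal{I}=\{k_1<\dots<k_{|\mathcal{I}|}\}$, $\widehat{\boldsymbol{\phi}}_{\mathcal{I}}=(\phi_{k_1}-\phi_{k_2},\dots,\phi_{k_1}-\phi_{k_{|\mathcal{I}|}})$, $\mathcal{M}_{\mathcal{I}}(\boldsymbol{\phi})=\{x\in\overline{\mathcal{D}}\mid\widehat{\boldsymbol{\phi}}_{\mathcal{I}}(x)=0\}$, and $\mathcal{E}_{\mathcal{I}}(\boldsymbol{\phi})=\bigcap_{j\in\mathcal{I}}\partial\Omega_j(\boldsymbol{\phi})$ (boundaries in $\mathbb{R}^d$). *)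

theory Defs
  imports "HOL-Analysis.Analysis"
begin

text \<open>C-infinity: derivatives of every order exist everywhere. F vs is the iterated
directional derivative of f along the directions in the list vs (innermost last).\<close>
definition smooth_fun :: "('a::euclidean_space \<Rightarrow> real) \<Rightarrow> bool" where
  "smooth_fun f \<longleftrightarrow> (\<exists>F :: 'a list \<Rightarrow> 'a \<Rightarrow> real. F [] = f \<and>
     (\<forall>vs x. (F vs has_derivative (\<lambda>h. F (h # vs) x)) (at x)))"

definition Omega :: "nat \<Rightarrow> 'a::euclidean_space set \<Rightarrow> (nat \<Rightarrow> 'a \<Rightarrow> real) \<Rightarrow> nat \<Rightarrow> 'a set" where
  "Omega \<kappa> D \<phi> j = interior {x \<in> D. \<forall>m\<in>{..<\<kappa>}. m \<noteq> j \<longrightarrow> \<phi> j x \<le> \<phi> m x}"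

definition Iset :: "nat \<Rightarrow> nat \<Rightarrow> nat \<Rightarrow> nat set set" where
  "Iset \<kappa> k r = {I. I \<subseteq> {..<\<kappa>} \<and> card I = r \<and> k \<in> I}"

text \<open>M_I: zero set in closure D of hat-phi_I = (phi_{k1} - phi_{k2}, ..., phi_{k1} - phi_{kr}),
  k1 = Min I.\<close>
definition Mset :: "'a::euclidean_space set \<Rightarrow> (nat \<Rightarrow> 'a \<Rightarrow> real) \<Rightarrow> nat set \<Rightarrow> 'a set" where
  "Mset D \<phi> I = {x \<in> closure D. \<forall>i\<in>I - {Min I}. \<phi> (Min I) x - \<phi> i x = 0}"

definition Eset :: "nat \<Rightarrow> 'a::euclidean_space set \<Rightarrow> (nat \<Rightarrow> 'a \<Rightarrow> real) \<Rightarrow> nat set \<Rightarrow> 'a set" where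
  "Eset \<kappa> D \<phi> I = (\<Inter>j\<in>I. frontier (Omega \<kappa> D \<phi> j))"

end

theory Submission
  imports Defs
begin

lemma closure_nhd:
  fixes x :: "'a::topological_space"
  shows "x \<in> closure S \<longleftrightarrow> (\<forall>W. open W \<longrightarrow> x \<in> W \<longrightarrow> W \<inter> S \<noteq> {})"
proof
  assume "x \<in> closure S"
  then show "\<forall>W. open W \<longrightarrow> x \<in> W \<longrightarrow> W \<inter> S \<noteq> {}"
    unfolding closure_iff_nhds_not_empty by (metis inf_commute order_refl)
next
  assume H: "\<forall>W. open W \<longrightarrow> x \<in> W \<longrightarrow> W \<inter> S \<noteq> {}"
  show "x \<in> closure S"
    unfolding closure_iff_nhds_not_empty
  proof (intro allI impI)
    fix A T assume "T \<subseteq> A" "open T" "x \<in> T"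
    then have "T \<inter> S \<noteq> {}" using H by blast
    then show "S \<inter> A \<noteq> {}" using \<open>T \<subseteq> A\<close> by blast
  qed
qed

lemma fin_cover:
  fixes x :: "'a::topological_space"
  assumes "finite F"
  shows "open U \<Longrightarrow> x \<in> closure U \<Longrightarrow> U \<subseteq> (\<Union>m\<in>F. C m) \<Longrightarrow> \<forall>m\<in>F. closed (C m)
     \<Longrightarrow> \<exists>m\<in>F. x \<in> closure (interior (C m))"
  using assms
proof (induction F arbitrary: U rule: finite_induct)
  case empty
  then show ?case by auto
next
  case (insert m0 F)
  show ?case
  proof (cases "x \<in> closure (interior (C m0))")
    case True
    then show ?thesis by auto
  next
    case False
    then obtain V where V: "open V" "x \<in> V" "V \<inter> interior (C m0) = {}"
      using closure_nhd by blast
    define U' where "U' = (U \<inter> V) - C m0"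
    have oU': "open U'" unfolding U'_def using insert V by (auto intro: open_Diff)
    have sU': "U' \<subseteq> (\<Union>m\<in>F. C m)" using insert.prems unfolding U'_def by auto
    have cU': "x \<in> closure U'"
      unfolding closure_nhd
    proof (intro allI impI)
      fix W assume W: "open W" "x \<in> W"
      have "(W \<inter> V) \<inter> U \<noteq> {}" using insert.prems(2) W V closure_nhd[of x U]
        by (meson IntI open_Int)
      moreover have "\<not> (U \<inter> W \<inter> V \<subseteq> C m0)"
      proof
        assume "U \<inter> W \<inter> V \<subseteq> C m0"
        then have "U \<inter> W \<inter> V \<subseteq> interior (C m0)"
          using insert.prems(1) W V by (intro interior_maximal) auto
        then show False using V calculation by auto
      qed
      ultimately show "W \<inter> U' \<noteq> {}" unfolding U'_def by auto
    qed
    from insert.IH[OF oU' cU' sU'] insert.prems(4) show ?thesis by auto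
  qed
qed

theorem lemma2p6:
  fixes D :: "'a::euclidean_space set" and \<kappa> k :: nat and \<phi> :: "nat \<Rightarrow> 'a \<Rightarrow> real"
  assumes "DIM('a) \<ge> 2" and "open D" and "bounded D"
    and "\<forall>j\<in>{..<\<kappa>}. smooth_fun (\<phi> j)"
    and "k \<in> {..<\<kappa>}"
  shows "D \<inter> (\<Union>I\<in>Iset \<kappa> k 2. Eset \<kappa> D \<phi> I) = D \<inter> (\<Union>r\<in>{2..}. \<Union>I\<in>Iset \<kappa> k r. Eset \<kappa> D \<phi> I)
       \<and> D \<inter> (\<Union>r\<in>{2..}. \<Union>I\<in>Iset \<kappa> k r. Eset \<kappa> D \<phi> I) \<subseteq> D \<inter> frontier (Omega \<kappa> D \<phi> k)
       \<and> ((\<forall>I\<in>Iset \<kappa> k 2. \<forall>x\<in>Mset D \<phi> I.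
              \<forall>f'. ((\<lambda>y. \<phi> (Min I) y - \<phi> (Max I) y) has_derivative f') (at x) \<longrightarrow> f' \<noteq> (\<lambda>h. 0))
          \<longrightarrow> D \<inter> (\<Union>r\<in>{2..}. \<Union>I\<in>Iset \<kappa> k r. Eset \<kappa> D \<phi> I) = D \<inter> frontier (Omega \<kappa> D \<phi> k))"
proof -
  let ?E = "\<lambda>I. Eset \<kappa> D \<phi> I"
  have sub: "(\<Union>r\<in>{2..}. \<Union>I\<in>Iset \<kappa> k r. ?E I) \<subseteq> frontier (Omega \<kappa> D \<phi> k)"
    unfolding Iset_def Eset_def by auto
  have eq1: "(\<Union>I\<in>Iset \<kappa> k 2. ?E I) = (\<Union>r\<in>{2..}. \<Union>I\<in>Iset \<kappa> k r. ?E I)"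
  proof
    show "(\<Union>I\<in>Iset \<kappa> k 2. ?E I) \<subseteq> (\<Union>r\<in>{2..}. \<Union>I\<in>Iset \<kappa> k r. ?E I)" by auto
  next
    show "(\<Union>r\<in>{2..}. \<Union>I\<in>Iset \<kappa> k r. ?E I) \<subseteq> (\<Union>I\<in>Iset \<kappa> k 2. ?E I)"
    proof
      fix x assume "x \<in> (\<Union>r\<in>{2..}. \<Union>I\<in>Iset \<kappa> k r. ?E I)"
      then obtain r I where r: "r \<ge> 2" "I \<in> Iset \<kappa> k r" "x \<in> ?E I" by auto
      have fI: "finite I" using r unfolding Iset_def by (auto intro: finite_subset)
      have "I - {k} \<noteq> {}"
      proof
        assume "I - {k} = {}"
        then have "I \<subseteq> {k}" by blast
        then have "card I \<le> card {k}" by (intro card_mono) auto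
        then show False using r unfolding Iset_def by simp
      qed
      then obtain j where j: "j \<in> I" "j \<noteq> k" by blast
      have "{k, j} \<in> Iset \<kappa> k 2" using r j unfolding Iset_def by auto
      moreover have "x \<in> ?E {k, j}" using r j unfolding Iset_def Eset_def by auto
      ultimately show "x \<in> (\<Union>I\<in>Iset \<kappa> k 2. ?E I)" by blast
    qed
  qed
  have part3: "D \<inter> frontier (Omega \<kappa> D \<phi> k) \<subseteq> (\<Union>I\<in>Iset \<kappa> k 2. ?E I)"
    if grad: "\<forall>I\<in>Iset \<kappa> k 2. \<forall>x\<in>Mset D \<phi> I.
              \<forall>f'. ((\<lambda>y. \<phi> (Min I) y - \<phi> (Max I) y) has_derivative f') (at x) \<longrightarrow> f' \<noteq> (\<lambda>h. 0)"
  proof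
    fix x assume x: "x \<in> D \<inter> frontier (Omega \<kappa> D \<phi> k)"
    have cont: "continuous_on UNIV (\<phi> j)" if "j < \<kappa>" for j
    proof -
      have "smooth_fun (\<phi> j)" using assms(4) that by auto
      then obtain F where F: "F [] = \<phi> j"
        "\<forall>vs x. (F vs has_derivative (\<lambda>h. F (h # vs) x)) (at x)"
        unfolding smooth_fun_def by blast
      show ?thesis unfolding continuous_on_eq_continuous_at[OF open_UNIV]
        using F by (metis has_derivative_continuous UNIV_I)
    qed
    define A where "A m = {y. \<forall>m'\<in>{..<\<kappa>}. m' \<noteq> m \<longrightarrow> \<phi> m y \<le> \<phi> m' y}" for m
    have Aclosed: "closed (A m)" if "m < \<kappa>" for m
    proof -
      have "A m = (\<Inter>m'\<in>{..<\<kappa>} - {m}. {y. \<phi> m y \<le> \<phi> m' y})" unfolding A_def by auto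
      moreover have "closed {y. \<phi> m y \<le> \<phi> m' y}" if "m' < \<kappa>" for m'
        using closed_Collect_le[OF cont cont] \<open>m < \<kappa>\<close> that by blast
      ultimately show ?thesis by (auto intro!: closed_INT)
    qed
    have OmA: "Omega \<kappa> D \<phi> j = interior (D \<inter> A j)" for j
      unfolding Omega_def A_def by (rule arg_cong[where f=interior]) auto
    have Dk_open: "open (D - A k)"
      using Aclosed assms(2,5) by (auto intro: open_Diff)
    have cover: "D - A k \<subseteq> (\<Union>m\<in>{..<\<kappa>} - {k}. A m)"
    proof
      fix y assume y: "y \<in> D - A k"
      have "finite ((\<lambda>m. \<phi> m y) ` {..<\<kappa>})" "(\<lambda>m. \<phi> m y) ` {..<\<kappa>} \<noteq> {}" using assms(5) by auto
      then have "Min ((\<lambda>m. \<phi> m y) ` {..<\<kappa>}) \<in> (\<lambda>m. \<phi> m y) ` {..<\<kappa>}"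
        by (rule Min_in)
      then obtain m where m: "m < \<kappa>" "\<phi> m y = Min ((\<lambda>m. \<phi> m y) ` {..<\<kappa>})"
        by auto
      have "y \<in> A m" unfolding A_def using m by auto
      moreover have "m \<noteq> k" using y \<open>y \<in> A m\<close> by auto
      ultimately show "y \<in> (\<Union>m\<in>{..<\<kappa>} - {k}. A m)" using m by auto
    qed
    have xcl: "x \<in> closure (D - A k)"
    proof (rule ccontr)
      assume "x \<notin> closure (D - A k)"
      then obtain V where V: "open V" "x \<in> V" "V \<inter> (D - A k) = {}" using closure_nhd by blast
      have "V \<inter> D \<subseteq> interior (D \<inter> A k)" using V assms(2) by (intro interior_maximal) auto
      then have "x \<in> Omega \<kappa> D \<phi> k" using V x OmA by auto
      then show False using x by (simp add: frontier_def interior_open open_interior Omega_def)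
    qed
    obtain m where m: "m \<in> {..<\<kappa>} - {k}" "x \<in> closure (interior (A m))"
      using fin_cover[OF _ Dk_open xcl cover] Aclosed by blast
    have "x \<in> D \<inter> closure (interior (A m))" using m x by auto
    then have "x \<in> closure (D \<inter> interior (A m))" using open_Int_closure_subset[OF assms(2)] by blast
    moreover have "D \<inter> interior (A m) = Omega \<kappa> D \<phi> m"
      unfolding OmA using assms(2) by (simp add: interior_open)
    ultimately have xclm: "x \<in> closure (Omega \<kappa> D \<phi> m)" by simp
    have I2: "{k, m} \<in> Iset \<kappa> k 2" using m assms(5) unfolding Iset_def by auto
    have xnm: "x \<notin> Omega \<kappa> D \<phi> m"
    proof
      assume xm: "x \<in> Omega \<kappa> D \<phi> m"
      have "x \<in> closure (Omega \<kappa> D \<phi> k)" using x by (simp add: frontier_def)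
      moreover have "open (Omega \<kappa> D \<phi> m)" unfolding Omega_def by simp
      ultimately have "Omega \<kappa> D \<phi> m \<inter> Omega \<kappa> D \<phi> k \<noteq> {}"
        using closure_nhd[of x] xm by blast
      then obtain y where y: "y \<in> Omega \<kappa> D \<phi> m" "y \<in> Omega \<kappa> D \<phi> k"
        by blast
      define W where "W = Omega \<kappa> D \<phi> m \<inter> Omega \<kappa> D \<phi> k"
      have oW: "open W" unfolding W_def Omega_def by auto
      have Wsub: "z \<in> D \<and> \<phi> m z = \<phi> k z" if "z \<in> W" for z
      proof -
        have "z \<in> D \<inter> A m" "z \<in> D \<inter> A k" using that unfolding W_def OmA
          using interior_subset by blast+
        then show ?thesis using m assms(5) unfolding A_def by (auto intro: order_antisym)
      qed
      have yW: "y \<in> W" using y W_def by auto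
      have eqall: "\<phi> i z - \<phi> i' z = 0" if "z \<in> W" "i \<in> {k,m}" "i' \<in> {k,m}" for z i i'
        using Wsub[OF that(1)] that(2,3) by auto
      have MinI: "Min {k,m} \<in> {k,m}" by (rule Min_in) auto
      have MaxI: "Max {k,m} \<in> {k,m}" by (rule Max_in) auto
      have "y \<in> closure D" using Wsub[OF yW] closure_subset by blast
      then have "y \<in> Mset D \<phi> {k, m}"
        unfolding Mset_def using eqall[OF yW] MinI by blast
      moreover have "((\<lambda>y. \<phi> (Min {k,m}) y - \<phi> (Max {k,m}) y) has_derivative (\<lambda>h. 0)) (at y)"
      proof (rule has_derivative_transform_within_open[of "\<lambda>y. 0" _ _ _ W])
        show "((\<lambda>y. 0) has_derivative (\<lambda>h. 0)) (at y)" by simp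
        show "open W" by (rule oW)
        show "y \<in> W" by (rule yW)
        fix z assume "z \<in> W"
        then show "0 = \<phi> (Min {k,m}) z - \<phi> (Max {k,m}) z"
          using eqall[OF _ MinI MaxI] by metis
      qed
      ultimately show False using grad I2 by blast
    qed
    have "x \<in> frontier (Omega \<kappa> D \<phi> m)" using xclm xnm
      by (simp add: frontier_def Omega_def)
    then have "x \<in> ?E {k, m}" using x unfolding Eset_def by auto
    then show "x \<in> (\<Union>I\<in>Iset \<kappa> k 2. ?E I)" using I2 by blast
  qed
  show ?thesis
  proof (intro conjI impI)
    show "D \<inter> (\<Union>I\<in>Iset \<kappa> k 2. ?E I) = D \<inter> (\<Union>r\<in>{2..}. \<Union>I\<in>Iset \<kappa> k r. ?E I)"
      using eq1 by simp
    show "D \<inter> (\<Union>r\<in>{2..}. \<Union>I\<in>Iset \<kappa> k r. ?E I) \<subseteq> D \<inter> frontier (Omega \<kappa> D \<phi> k)"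
      using sub by fast
  next
    assume g: "\<forall>I\<in>Iset \<kappa> k 2. \<forall>x\<in>Mset D \<phi> I.
              \<forall>f'. ((\<lambda>y. \<phi> (Min I) y - \<phi> (Max I) y) has_derivative f') (at x) \<longrightarrow> f' \<noteq> (\<lambda>h. 0)"
    have p3: "D \<inter> frontier (Omega \<kappa> D \<phi> k) \<subseteq> (\<Union>I\<in>Iset \<kappa> k 2. ?E I)"
      by (rule part3[OF g])
    show "D \<inter> (\<Union>r\<in>{2..}. \<Union>I\<in>Iset \<kappa> k r. ?E I) = D \<inter> frontier (Omega \<kappa> D \<phi> k)"
    proof (rule equalityI)
      show "D \<inter> (\<Union>r\<in>{2..}. \<Union>I\<in>Iset \<kappa> k r. ?E I) \<subseteq> D \<inter> frontier (Omega \<kappa> D \<phi> k)"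
        using sub by fast
      show "D \<inter> frontier (Omega \<kappa> D \<phi> k) \<subseteq> D \<inter> (\<Union>r\<in>{2..}. \<Union>I\<in>Iset \<kappa> k r. ?E I)"
        using p3 eq1 by fast
    qed
  qed
qed

end
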